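(* Let $n,v,s,t$ be integers with $1\le v\le s\le t\le n$, let $u=\lceil s/v\rceil$, assume $uv\le n$, and put $n_0=n-u(v-1)$. Let $\mathfrak{P}=\{\mathcal{P}_1,\dots,\mathcal{P}_S\}$ be a $u$-complete collection of $v$-partitions of $[n]$, $\mathcal{P}_i=\{P^i_1,\dots,P^i_v\}$, such that every part satisfies $|P^i_j|\le n_0$ (this is the case, e.g., when $S=S(n,u,v)$ is minimal). Let $\mathcal{C}_0$ be a systematic linear $(u,t)$-batch code over $\mathbb{F}_q$ of dimension $n_0$ and redundancy $r_0$, with (linear) encoder $\mathcal{E}_0:\mathbb{F}_q^{n_0}\to\mathbb{F}_q^{r_0}$ such that $(\mathbf{x},\mathcal{E}_0(\mathbf{x}))\in\mathcal{C}_0$ for all $\mathbf{x}$. Define $\mathcal{E}:\mathbb{F}_q^n\to\mathbb{F}_q^{vSr_0}$ by $$\mathcal{E}(\mathbf{x})=\big(\mathcal{E}_0(\mathbf{x}|_{P^1_1},\mathbf{0}),\dots,\mathcal{E}_0(\mathbf{x}|_{P^1_v},\mathbf{0}),\dots,\mathcal{E}_0(\mathbf{x}|_{P^S_1},\mathbf{0}),\dots,\mathcal{E}_0(\mathbf{x}|_{P^S_v},\mathbf{0})\big),$$ where $\mathbf{x}|_P$ lists the coordinates of $\mathbf{x}$ indexed by $P$ in increasing order and $(\mathbf{x}|_P,\mathbf{0})\in\mathbb{F}_q^{n_0}$ is obtained by appending zeros. Then $\mathcal{C}=\{(\mathbf{x},\mathcal{E}(\mathbf{x})):\mathbf{x}\in\mathbb{F}_q^n\}$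 is an $(s,t)$-batch code of dimension $n$ and redundancy $v\cdot S\cdot r_0$.
   Context: $[m]=\{1,\dots,m\}$. A linear code $\mathcal{C}\subseteq\mathbb{F}^N$ of dimension $n$ is systematic if for every $\mathbf{x}\in\mathbb{F}^n$ there is a unique codeword whose first $n$ coordinates equal $\mathbf{x}$. A set $R\subseteq[N]$ is a recovering set for $i\in[n]$ if there are scalars $\lambda_k$ ($k\in R$) with $\mathbf{c}(i)=\sum_{k\in R}\lambda_k\mathbf{c}(k)$ for all $\mathbf{c}\in\mathcal{C}$. $(s,t)$-batch code ($1\le s\le t$): a systematic linear code $\mathcal{C}\subseteq\mathbb{F}^N$ of dimension $n$ such that for every choice of indices $i_1,\dots,i_s\in[n]$ (not necessarily distinct) and nonnegative integers $a_1,\dots,a_s$ with $\sum_j a_j=t$, there exist $t$ pairwise disjoint sets $R_{j,l}\subseteq[N]$ ($j\in[s]$, $l\in[a_j]$), each a recovering set for $i_j$. Redundancy is $N-n$. A $v$-partition of $[n]$ is a partition of $[n]$ into $v$ sets $P_1,\dots,P_v$ (for this definition parts may be empty). A $uv$-subset $I\subseteq[n]$ is covered by the $v$-partition $\{P_1,\dots,P_v\}$ if $|P_i\cap I|=u$ for all $i\in[v]$. A collection of $v$-partitions of $[n]$ is $u$-complete if every $uv$-subset of $[n]$ is covered by some member of the collection. $S(n,u,v)$ is the minimum cardinality of a $u$-complete collection of $v$-partitions of $[n]$ (for $uv\le n$). *)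

theory Defs
  imports Complex_Main
begin

text \<open>Vectors in F^N are lists of length N; coordinates are 1-based as in the paper:
  coordinate k of c is c ! (k - 1), for k in {1..N}.\<close>

definition linear_code :: "nat \<Rightarrow> ('a::field) list set \<Rightarrow> bool" where
  "linear_code N C \<longleftrightarrow> C \<subseteq> {c. length c = N} \<and> replicate N 0 \<in> C \<and>
     (\<forall>c\<in>C. \<forall>d\<in>C. map2 (+) c d \<in> C) \<and> (\<forall>a. \<forall>c\<in>C. map ((*) a) c \<in> C)"

definition systematic :: "nat \<Rightarrow> nat \<Rightarrow> ('a::field) list set \<Rightarrow> bool" where
  "systematic N n C \<longleftrightarrow> linear_code N C \<and> n \<le> N \<and>
     (\<forall>x. length x = n \<longrightarrow> (\<exists>!c. c \<in> C \<and> take n c = x))"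

definition recovering_set :: "nat \<Rightarrow> ('a::field) list set \<Rightarrow> nat \<Rightarrow> nat set \<Rightarrow> bool" where
  "recovering_set N C i R \<longleftrightarrow> R \<subseteq> {1..N} \<and>
     (\<exists>lam::nat \<Rightarrow> 'a. \<forall>c\<in>C. c ! (i - 1) = (\<Sum>k\<in>R. lam k * c ! (k - 1)))"

text \<open>(s,t)-batch code of length N and dimension n (redundancy N - n).\<close>
definition batch_code :: "nat \<Rightarrow> nat \<Rightarrow> nat \<Rightarrow> nat \<Rightarrow> ('a::field) list set \<Rightarrow> bool" where
  "batch_code s t N n C \<longleftrightarrow> 1 \<le> s \<and> s \<le> t \<and> systematic N n C \<and>
     (\<forall>(ii::nat \<Rightarrow> nat) (a::nat \<Rightarrow> nat).
        (\<forall>j\<in>{1..s}. ii j \<in> {1..n}) \<longrightarrow> (\<Sum>j=1..s. a j) = t \<longrightarrow>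
        (\<exists>R::nat \<Rightarrow> nat \<Rightarrow> nat set.
           (\<forall>j\<in>{1..s}. \<forall>l\<in>{1..a j}. recovering_set N C (ii j) (R j l)) \<and>
           (\<forall>j\<in>{1..s}. \<forall>l\<in>{1..a j}. \<forall>j'\<in>{1..s}. \<forall>l'\<in>{1..a j'}.
               (j, l) \<noteq> (j', l') \<longrightarrow> R j l \<inter> R j' l' = {})))"

text \<open>A v-partition of [n], indexed by {1..v}; parts may be empty.\<close>
definition v_partition :: "nat \<Rightarrow> nat \<Rightarrow> (nat \<Rightarrow> nat set) \<Rightarrow> bool" where
  "v_partition n v P \<longleftrightarrow> (\<Union>j\<in>{1..v}. P j) = {1..n} \<and>
     (\<forall>j\<in>{1..v}. \<forall>j'\<in>{1..v}. j \<noteq> j' \<longrightarrow> P j \<inter> P j' = {})"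

definition covers :: "nat \<Rightarrow> nat \<Rightarrow> (nat \<Rightarrow> nat set) \<Rightarrow> nat set \<Rightarrow> bool" where
  "covers u v P I \<longleftrightarrow> (\<forall>j\<in>{1..v}. card (P j \<inter> I) = u)"

definition u_complete :: "nat \<Rightarrow> nat \<Rightarrow> nat \<Rightarrow> nat \<Rightarrow> (nat \<Rightarrow> nat \<Rightarrow> nat set) \<Rightarrow> bool" where
  "u_complete n u v S Ps \<longleftrightarrow> (\<forall>i\<in>{1..S}. v_partition n v (Ps i)) \<and>
     (\<forall>I. I \<subseteq> {1..n} \<and> card I = u * v \<longrightarrow> (\<exists>i\<in>{1..S}. covers u v (Ps i) I))"

definition restrict_vec :: "'a list \<Rightarrow> nat set \<Rightarrow> 'a list" where
  "restrict_vec x P = map (\<lambda>k. x ! (k - 1)) (sorted_list_of_set P)"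

definition pad_zeros :: "nat \<Rightarrow> ('a::zero) list \<Rightarrow> 'a list" where
  "pad_zeros m xs = xs @ replicate (m - length xs) 0"

definition construct_encoder ::
  "nat \<Rightarrow> nat \<Rightarrow> nat \<Rightarrow> (nat \<Rightarrow> nat \<Rightarrow> nat set) \<Rightarrow> (('a::field) list \<Rightarrow> 'a list) \<Rightarrow> 'a list \<Rightarrow> 'a list" where
  "construct_encoder n0 v S Ps E0 x =
     concat [E0 (pad_zeros n0 (restrict_vec x (Ps i j))). i \<leftarrow> [1..<S+1], j \<leftarrow> [1..<v+1]]"

end

theory Submission
  imports Defs
begin


lemma cc: "concat (concat xss) = concat (map concat xss)" by (induct xss) auto

lemma enc_eq: "construct_encoder n0 v S Ps E0 x =
  concat (map (\<lambda>i. concat (map (\<lambda>j. E0 (pad_zeros n0 (restrict_vec x (Ps i j)))) [1..<v+1])) [1..<S+1])"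
  unfolding construct_encoder_def cc by (simp only: map_map o_def concat_map_singleton)

lemma map2_append: "length a = length c \<Longrightarrow> map2 f (a@b) (c@d) = map2 f a c @ map2 f b d"
  by (simp add: zip_append)

lemma concat_map2:
  "(\<forall>z\<in>set zs. length (f z) = length (g z)) \<Longrightarrow>
   map2 (+) (concat (map f zs)) (concat (map g zs)) = concat (map (\<lambda>z. map2 (+) (f z) (g z)) zs)"
  by (induct zs) (auto simp: map2_append)

lemma length_concat_uniform: "(\<forall>xs\<in>set xss. length xs = r) \<Longrightarrow> length (concat xss) = length xss * r"
  by (induct xss) auto

lemma nth_concat_uniform:
  "(\<forall>xs\<in>set xss. length xs = r) \<Longrightarrow> b < length xss \<Longrightarrow> k < r \<Longrightarrow>
   concat xss ! (b*r+k) = xss ! b ! k"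
proof (induct xss arbitrary: b)
  case Nil then show ?case by simp
next
  case (Cons xs xss)
  show ?case
  proof (cases b)
    case 0 then show ?thesis using Cons by (simp add: nth_append)
  next
    case (Suc b')
    have "concat (xs # xss) ! (b*r+k) = concat xss ! (b'*r+k)"
      using Cons.prems Suc by (simp add: nth_append)
    then show ?thesis using Cons Suc by simp
  qed
qed

lemma map2_map_map: "map2 (+) (map f L) (map g L) = map (\<lambda>k. f k + g k) L"
  by (induct L) auto

lemma restrict_add:
  assumes "P \<subseteq> {1..length x}" "length y = length x"
  shows "restrict_vec (map2 (+) x y) P = map2 (+) (restrict_vec x P) (restrict_vec (y::'a::plus list) P)"
proof -
  have "k - 1 < length x" if k: "k \<in> set (sorted_list_of_set P)" for k
  proof -
    have "k \<in> P" using k by (cases "finite P") auto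
    then have "k \<in> {1..length x}" using assms(1) by blast
    then show ?thesis by auto
  qed
  then show ?thesis unfolding restrict_vec_def map2_map_map
    using assms(2) by (auto intro!: map_cong)
qed

lemma restrict_smul:
  assumes "P \<subseteq> {1..length x}"
  shows "restrict_vec (map ((*) c) x) P = map ((*) (c::'a::times)) (restrict_vec x P)"
proof -
  have "k - 1 < length x" if k: "k \<in> set (sorted_list_of_set P)" for k
  proof -
    have "k \<in> P" using k by (cases "finite P") auto
    then have "k \<in> {1..length x}" using assms(1) by blast
    then show ?thesis by auto
  qed
  then show ?thesis unfolding restrict_vec_def by auto
qed

lemma length_restrict: "finite P \<Longrightarrow> length (restrict_vec x P) = card P"
  unfolding restrict_vec_def by simp

lemma pad_add: "length a = length b \<Longrightarrow>
  pad_zeros m (map2 (+) a b) = map2 (+) (pad_zeros m a) (pad_zeros m (b::'a::monoid_add list))"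
  unfolding pad_zeros_def by (simp add: map2_append zip_replicate map_replicate_const)

lemma pad_smul: "pad_zeros m (map ((*) c) a) = map ((*) (c::'a::mult_zero)) (pad_zeros m a)"
  unfolding pad_zeros_def by simp

lemma length_pad: "length xs \<le> m \<Longrightarrow> length (pad_zeros m xs) = m"
  unfolding pad_zeros_def by simp

lemma E0_add:
  fixes C0 :: "('a::field) list set"
  assumes sys: "systematic N n0 C0" and E0: "\<forall>x. length x = n0 \<longrightarrow> length (E0 x) = r0 \<and> x @ E0 x \<in> C0"
    and x: "length x = n0" and y: "length y = n0"
  shows "E0 (map2 (+) x y) = map2 (+) (E0 x) (E0 y)"
proof -
  have lin: "linear_code N C0" using sys systematic_def by blast
  have c1: "x @ E0 x \<in> C0" and c2: "y @ E0 y \<in> C0" using E0 x y by auto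
  have "map2 (+) (x @ E0 x) (y @ E0 y) \<in> C0" using lin c1 c2 unfolding linear_code_def by blast
  then have m1: "map2 (+) x y @ map2 (+) (E0 x) (E0 y) \<in> C0" using x y by (simp add: map2_append)
  have lxy: "length (map2 (+) x y) = n0" using x y by simp
  have m2: "map2 (+) x y @ E0 (map2 (+) x y) \<in> C0" using E0 lxy by blast
  have uniq: "\<exists>!c. c \<in> C0 \<and> take n0 c = map2 (+) x y" using sys lxy unfolding systematic_def by blast
  have "map2 (+) x y @ map2 (+) (E0 x) (E0 y) = map2 (+) x y @ E0 (map2 (+) x y)"
    using uniq m1 m2 lxy by (metis append_eq_conv_conj)
  then show ?thesis by simp
qed

lemma E0_smul:
  fixes C0 :: "('a::field) list set"
  assumes sys: "systematic N n0 C0" and E0: "\<forall>x. length x = n0 \<longrightarrow> length (E0 x) = r0 \<and> x @ E0 x \<in> C0"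
    and x: "length x = n0"
  shows "E0 (map ((*) c) x) = map ((*) c) (E0 x)"
proof -
  have lin: "linear_code N C0" using sys systematic_def by blast
  have c1: "x @ E0 x \<in> C0" using E0 x by auto
  have m1: "map ((*) c) x @ map ((*) c) (E0 x) \<in> C0" using lin c1 unfolding linear_code_def by (metis map_append)
  have lxy: "length (map ((*) c) x) = n0" using x by simp
  have m2: "map ((*) c) x @ E0 (map ((*) c) x) \<in> C0" using E0 lxy by blast
  have uniq: "\<exists>!c'. c' \<in> C0 \<and> take n0 c' = map ((*) c) x" using sys lxy unfolding systematic_def by blast
  have "map ((*) c) x @ map ((*) c) (E0 x) = map ((*) c) x @ E0 (map ((*) c) x)"
    using uniq m1 m2 lxy by (metis append_eq_conv_conj)
  then show ?thesis by simp
qed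

lemma div_block: "k < (r::nat) \<Longrightarrow> k' < r \<Longrightarrow> b*r+k = b'*r+k' \<Longrightarrow> b = b' \<and> k = k'"
proof -
  assume a: "k < r" "k' < r" "b*r+k = b'*r+k'"
  have e1: "(k + b*r) div r = b" "(k + b*r) mod r = k" using a(1) by simp_all
  have e2: "(k' + b'*r) div r = b'" "(k' + b'*r) mod r = k'" using a(2) by simp_all
  show ?thesis using e1 e2 a(3) by (metis add.commute)
qed



lemma batch_flat:
  fixes C0 :: "('a::field) list set" and g :: "'q \<Rightarrow> nat"
  assumes bc: "batch_code u t N n0 C0"
    and fin: "finite Q" and cQ: "card Q \<le> t" and cg: "card (g ` Q) \<le> u"
    and gr: "g ` Q \<subseteq> {1..n0}"
  shows "\<exists>R. (\<forall>q\<in>Q. recovering_set N C0 (g q) (R q)) \<and>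
             (\<forall>q\<in>Q. \<forall>q'\<in>Q. q \<noteq> q' \<longrightarrow> R q \<inter> R q' = {})"
proof (cases "Q = {}")
  case True then show ?thesis by auto
next
  case False
  define G where "G = g ` Q"
  define d where "d = card G"
  have finG: "finite G" using fin G_def by auto
  have d1: "1 \<le> d" using False finG G_def d_def by (simp add: Suc_leI card_gt_0_iff)
  have du: "d \<le> u" using cg G_def d_def by simp
  obtain e where e: "bij_betw e {1..d} G" using ex_bij_betw_nat_finite_1[OF finG] d_def by blast
  define fib where "fib z = {q\<in>Q. g q = z}" for z
  have finfib: "finite (fib z)" for z using fin fib_def by auto
  define ii' where "ii' k = (if k \<le> d then e k else e 1)" for k
  define a' where "a' k = (if k \<le> d then card (fib (e k)) else 0) + (if k = 1 then t - card Q else 0)" for k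
  have u1: "1 \<le> u" using d1 du by simp
  have eG: "k \<in> {1..d} \<Longrightarrow> e k \<in> G" for k using bij_betw_apply[OF e] by blast
  have ii'r: "\<forall>j\<in>{1..u}. ii' j \<in> {1..n0}"
  proof
    fix j assume j: "j \<in> {1..u}"
    have "ii' j \<in> G" unfolding ii'_def using eG d1 j by auto
    then show "ii' j \<in> {1..n0}" using gr G_def by auto
  qed
  have ii'r': "\<And>j. j \<in> {1..u} \<Longrightarrow> ii' j \<in> {1..n0}" using ii'r by blast
  have s1: "(\<Sum>k=1..u. (if k \<le> d then card (fib (e k)) else 0)) = (\<Sum>k=1..d. card (fib (e k)))"
  proof -
    have "(\<Sum>k=1..u. (if k \<le> d then card (fib (e k)) else 0)) = (\<Sum>k\<in>{1..d}. (if k \<le> d then card (fib (e k)) else 0))"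
      by (rule sum.mono_neutral_right) (use du in auto)
    then show ?thesis by simp
  qed
  have s2: "(\<Sum>k=1..d. card (fib (e k))) = (\<Sum>z\<in>G. card (fib z))"
    using sum.reindex_bij_betw[OF e, of "\<lambda>z. card (fib z)"] by simp
  have s3: "(\<Sum>z\<in>G. card (fib z)) = card Q"
    using sum.image_gen[OF fin, of "\<lambda>_. 1::nat" g] unfolding G_def fib_def by simp
  have s4: "(\<Sum>k=1..u. (if k = 1 then t - card Q else 0)) = t - card Q"
    using u1 by (simp add: sum.delta)
  have suma: "(\<Sum>j=1..u. a' j) = t"
    unfolding a'_def sum.distrib s1 s2 s3 s4 using cQ by simp
  obtain R' where R'1: "\<forall>j\<in>{1..u}. \<forall>l\<in>{1..a' j}. recovering_set N C0 (ii' j) (R' j l)"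
    and R'2: "\<forall>j\<in>{1..u}. \<forall>l\<in>{1..a' j}. \<forall>j'\<in>{1..u}. \<forall>l'\<in>{1..a' j'}.
               (j, l) \<noteq> (j', l') \<longrightarrow> R' j l \<inter> R' j' l' = {}"
    using bc[unfolded batch_code_def, THEN conjunct2, THEN conjunct2, THEN conjunct2, rule_format, of ii' a', OF ii'r' suma] by blast
  have "\<forall>z. \<exists>h. bij_betw h (fib z) {0..<card (fib z)}"
    using ex_bij_betw_finite_nat[OF finfib] by blast
  then obtain hh where hh: "\<And>z. bij_betw (hh z) (fib z) {0..<card (fib z)}" by (rule choice[elim_format]) blast
  define kk where "kk q = the_inv_into {1..d} e (g q)" for q
  define ll where "ll q = hh (g q) q + 1" for q
  have kk1: "kk q \<in> {1..d}" and kk2: "e (kk q) = g q" if "q \<in> Q" for q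
  proof -
    have "g q \<in> G" using that G_def by auto
    then show "kk q \<in> {1..d}" "e (kk q) = g q"
      unfolding kk_def using e
      by (auto simp: bij_betw_def the_inv_into_into f_the_inv_into_f the_inv_into_f_f)
  qed
  have ll1: "ll q \<in> {1..a' (kk q)}" if "q \<in> Q" for q
  proof -
    have "q \<in> fib (g q)" using that fib_def by auto
    then have "hh (g q) q < card (fib (g q))" using bij_betw_apply[OF hh[of "g q"]] by fastforce
    then show ?thesis using kk1[OF that] kk2[OF that] unfolding ll_def a'_def by auto
  qed
  show ?thesis
  proof (intro exI[of _ "\<lambda>q. R' (kk q) (ll q)"] conjI ballI impI)
    fix q assume q: "q \<in> Q"
    have "ii' (kk q) = g q" using kk1[OF q] kk2[OF q] ii'_def by auto
    moreover have "kk q \<in> {1..u}" using kk1[OF q] du by auto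
    ultimately show "recovering_set N C0 (g q) (R' (kk q) (ll q))"
      using R'1 ll1[OF q] by metis
  next
    fix q q' assume q: "q \<in> Q" and q': "q' \<in> Q" and ne: "q \<noteq> q'"
    have "(kk q, ll q) \<noteq> (kk q', ll q')"
    proof
      assume eq: "(kk q, ll q) = (kk q', ll q')"
      then have gg: "g q = g q'" using kk2[OF q] kk2[OF q'] by auto
      then have "hh (g q) q = hh (g q) q'" using eq ll_def by auto
      moreover have "q \<in> fib (g q)" "q' \<in> fib (g q)" using q q' gg fib_def by auto
      ultimately show False using hh[of "g q"] ne unfolding bij_betw_def inj_on_def by blast
    qed
    then show "R' (kk q) (ll q) \<inter> R' (kk q') (ll q') = {}"
    proof -
      have "kk q \<in> {1..u}" "kk q' \<in> {1..u}" using kk1[OF q] kk1[OF q'] du by auto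
      then show ?thesis using R'2 ll1[OF q] ll1[OF q'] \<open>(kk q, ll q) \<noteq> (kk q', ll q')\<close> by metis
    qed
  qed
qed



locale constr =
  fixes n n0 r0 v S :: nat and Ps :: "nat \<Rightarrow> nat \<Rightarrow> nat set"
    and C0 :: "('a::field) list set" and E0 :: "'a list \<Rightarrow> 'a list"
  assumes sysC0: "systematic (n0 + r0) n0 C0"
    and E0: "\<forall>x. length x = n0 \<longrightarrow> length (E0 x) = r0 \<and> x @ E0 x \<in> C0"
    and Ps_sub: "\<And>i j. i \<in> {1..S} \<Longrightarrow> j \<in> {1..v} \<Longrightarrow> Ps i j \<subseteq> {1..n}"
    and Ps_card: "\<And>i j. i \<in> {1..S} \<Longrightarrow> j \<in> {1..v} \<Longrightarrow> card (Ps i j) \<le> n0"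
begin

definition E where "E = construct_encoder n0 v S Ps E0"
definition w :: "nat \<Rightarrow> nat \<Rightarrow> 'a list \<Rightarrow> 'a list" where "w i j x = pad_zeros n0 (restrict_vec x (Ps i j))"

lemma fin_Ps: "i \<in> {1..S} \<Longrightarrow> j \<in> {1..v} \<Longrightarrow> finite (Ps i j)"
  using Ps_sub finite_subset by blast

lemma len_w: "i \<in> {1..S} \<Longrightarrow> j \<in> {1..v} \<Longrightarrow> length (w i j x) = n0"
  unfolding w_def using fin_Ps Ps_card by (simp add: length_pad length_restrict)

lemma len_E0w: "i \<in> {1..S} \<Longrightarrow> j \<in> {1..v} \<Longrightarrow> length (E0 (w i j x)) = r0"
  using E0 len_w by blast

lemma E_eq: "E x = concat (map (\<lambda>i. concat (map (\<lambda>j. E0 (w i j x)) [1..<v+1])) [1..<S+1])"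
  unfolding E_def w_def by (rule enc_eq)

lemma len_inner: "i \<in> {1..S} \<Longrightarrow> length (concat (map (\<lambda>j. E0 (w i j x)) [1..<v+1])) = v * r0"
  by (subst length_concat_uniform[where r=r0]) (auto simp: len_E0w simp del: upt_Suc)

lemma len_inner': "Suc 0 \<le> i \<Longrightarrow> i < Suc S \<Longrightarrow> length (concat (map (\<lambda>j. E0 (w i j x)) [Suc 0..<Suc v])) = v * r0"
  using len_inner[of i x] by simp

lemma len_E: "length (E x) = v * S * r0"
  unfolding E_eq by (subst length_concat_uniform[where r="v*r0"]) (auto simp: len_inner len_inner' simp del: upt_Suc)

lemma w_add: "i \<in> {1..S} \<Longrightarrow> j \<in> {1..v} \<Longrightarrow> length x = n \<Longrightarrow> length y = n \<Longrightarrow>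
  w i j (map2 (+) x y) = map2 (+) (w i j x) (w i j y)"
proof -
  assume a: "i \<in> {1..S}" "j \<in> {1..v}" "length x = n" "length y = n"
  have sub: "Ps i j \<subseteq> {1..length x}" using Ps_sub[OF a(1,2)] a(3) by simp
  have l: "length (restrict_vec x (Ps i j)) = length (restrict_vec y (Ps i j))"
    using fin_Ps[OF a(1,2)] by (simp add: length_restrict)
  have ly: "length y = length x" using a by simp
  show ?thesis unfolding w_def restrict_add[OF sub ly] by (rule pad_add[OF l])
qed

lemma w_smul: "i \<in> {1..S} \<Longrightarrow> j \<in> {1..v} \<Longrightarrow> length x = n \<Longrightarrow>
  w i j (map ((*) c) x) = map ((*) c) (w i j x)"
proof -
  assume a: "i \<in> {1..S}" "j \<in> {1..v}" "length x = n"
  have sub: "Ps i j \<subseteq> {1..length x}" using Ps_sub[OF a(1,2)] a(3) by simp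
  show ?thesis unfolding w_def restrict_smul[OF sub] by (rule pad_smul)
qed

lemma E_add: assumes "length x = n" "length y = n"
  shows "E (map2 (+) x y) = map2 (+) (E x) (E y)"
proof -
  have "E0 (w i j (map2 (+) x y)) = map2 (+) (E0 (w i j x)) (E0 (w i j y))"
    if "i \<in> {1..S}" "j \<in> {1..v}" for i j
    using w_add[OF that assms] E0_add[OF sysC0 E0 len_w[OF that] len_w[OF that]] by simp
  then have "E (map2 (+) x y) = concat (map (\<lambda>i. concat (map (\<lambda>j. map2 (+) (E0 (w i j x)) (E0 (w i j y))) [1..<v+1])) [1..<S+1])"
    unfolding E_eq by (intro arg_cong[where f=concat] map_cong refl) (simp del: upt_Suc)
  also have "\<dots> = concat (map (\<lambda>i. map2 (+) (concat (map (\<lambda>j. E0 (w i j x)) [1..<v+1])) (concat (map (\<lambda>j. E0 (w i j y)) [1..<v+1]))) [1..<S+1])"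
    by (intro arg_cong[where f=concat] map_cong refl concat_map2[symmetric]) (simp add: len_E0w del: upt_Suc)
  also have "\<dots> = map2 (+) (E x) (E y)"
    unfolding E_eq by (rule concat_map2[symmetric]) (auto simp: len_inner len_inner' simp del: upt_Suc)
  finally show ?thesis .
qed

lemma E_smul: assumes "length x = n"
  shows "E (map ((*) c) x) = map ((*) c) (E x)"
proof -
  have "E0 (w i j (map ((*) c) x)) = map ((*) c) (E0 (w i j x))"
    if "i \<in> {1..S}" "j \<in> {1..v}" for i j
    using w_smul[OF that assms] E0_smul[OF sysC0 E0 len_w[OF that]] by simp
  then show ?thesis
    unfolding E_eq map_concat map_map o_def by (intro arg_cong[where f=concat] map_cong refl) (simp del: upt_Suc)
qed

lemma E_nth: assumes "i \<in> {1..S}" "j \<in> {1..v}" "k < r0"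
  shows "E x ! (((i-1)*v + (j-1))*r0 + k) = E0 (w i j x) ! k"
proof -
  have eq: "((i-1)*v + (j-1))*r0 + k = (i-1)*(v*r0) + ((j-1)*r0 + k)"
    by (simp add: algebra_simps)
  have jl: "(j-1)*r0 + k < v*r0"
  proof -
    have "(j-1)*r0 + k < (j-1)*r0 + r0" using assms by simp
    also have "\<dots> = j*r0" using assms by (cases j) auto
    also have "\<dots> \<le> v*r0" using assms by simp
    finally show ?thesis .
  qed
  have "E x ! (((i-1)*v + (j-1))*r0 + k) = concat (map (\<lambda>j. E0 (w i j x)) [1..<v+1]) ! ((j-1)*r0 + k)"
    unfolding E_eq eq using assms jl
    by (subst nth_concat_uniform[where r="v*r0"]) (auto simp: len_inner len_inner' simp del: upt_Suc)
  also have "\<dots> = E0 (w i j x) ! k"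
    using assms by (subst nth_concat_uniform[where r="r0"]) (auto simp: len_E0w simp del: upt_Suc)
  finally show ?thesis .
qed


definition C where "C = {x @ E x | x. length x = n}"

lemma map_mult0: "map ((*) (0::'a)) l = replicate (length l) 0" by (induct l) auto

lemma E_zero: "E (replicate n 0) = replicate (v*S*r0) 0"
proof -
  have "E (replicate n 0) = E (map ((*) 0) (replicate n (0::'a)))" by simp
  also have "\<dots> = map ((*) 0) (E (replicate n 0))" by (rule E_smul) simp
  also have "\<dots> = replicate (v*S*r0) 0" by (simp only: map_mult0 len_E)
  finally show ?thesis .
qed

lemma C_sys: "systematic (n + v*S*r0) n C"
  unfolding systematic_def linear_code_def
proof (intro conjI ballI allI impI)
  show "C \<subseteq> {c. length c = n + v * S * r0}" unfolding C_def by (auto simp: len_E)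
  have "replicate (n + v * S * r0) (0::'a) = replicate n 0 @ E (replicate n 0)"
    using E_zero by (simp add: replicate_add)
  then show "replicate (n + v * S * r0) 0 \<in> C" unfolding C_def by force
next
  fix c d assume "c \<in> C" "d \<in> C"
  then obtain x y where x: "length x = n" "c = x @ E x" and y: "length y = n" "d = y @ E y"
    unfolding C_def by blast
  have "map2 (+) c d = map2 (+) x y @ E (map2 (+) x y)"
    using x y by (simp add: map2_append len_E E_add)
  moreover have "length (map2 (+) x y) = n" using x y by simp
  ultimately show "map2 (+) c d \<in> C" unfolding C_def by blast
next
  fix a c assume "c \<in> C"
  then obtain x where x: "length x = n" "c = x @ E x" unfolding C_def by blast
  have "map ((*) a) c = map ((*) a) x @ E (map ((*) a) x)"
    using x by (simp add: E_smul)
  moreover have "length (map ((*) a) x) = n" using x by simp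
  ultimately show "map ((*) a) c \<in> C" unfolding C_def by blast
next
  show "n \<le> n + v * S * r0" by simp
next
  fix x :: "'a list" assume x: "length x = n"
  show "\<exists>!c. c \<in> C \<and> take n c = x"
  proof
    show "x @ E x \<in> C \<and> take n (x @ E x) = x" using x unfolding C_def by auto
  next
    fix c assume "c \<in> C \<and> take n c = x"
    then obtain y where y: "length y = n" "c = y @ E y" "take n c = x" unfolding C_def by blast
    then have "y = x" by simp
    then show "c = x @ E x" using y by simp
  qed
qed

lemma coord_a:
  assumes x: "length x = n" and ij: "i \<in> {1..S}" "j \<in> {1..v}" and m: "m < card (Ps i j)"
  shows "(w i j x @ E0 (w i j x)) ! m = (x @ E x) ! (sorted_list_of_set (Ps i j) ! m - 1)"
    and "sorted_list_of_set (Ps i j) ! m \<in> Ps i j"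
proof -
  have fin: "finite (Ps i j)" using fin_Ps[OF ij] .
  show mem: "sorted_list_of_set (Ps i j) ! m \<in> Ps i j"
    using m fin by (metis nth_mem length_sorted_list_of_set set_sorted_list_of_set)
  have "sorted_list_of_set (Ps i j) ! m \<in> {1..n}" using mem Ps_sub[OF ij] by blast
  then have lt: "sorted_list_of_set (Ps i j) ! m - 1 < length x" using x by auto
  have mn0: "m < n0" using m Ps_card[OF ij] by simp
  have lr: "length (restrict_vec x (Ps i j)) = card (Ps i j)" using fin by (simp add: length_restrict)
  have "(w i j x @ E0 (w i j x)) ! m = w i j x ! m" using mn0 len_w[OF ij] by (simp add: nth_append)
  also have "\<dots> = restrict_vec x (Ps i j) ! m" unfolding w_def pad_zeros_def using m lr by (simp add: nth_append)
  also have "\<dots> = x ! (sorted_list_of_set (Ps i j) ! m - 1)" unfolding restrict_vec_def using m fin by simp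
  also have "\<dots> = (x @ E x) ! (sorted_list_of_set (Ps i j) ! m - 1)" using lt by (simp add: nth_append)
  finally show "(w i j x @ E0 (w i j x)) ! m = (x @ E x) ! (sorted_list_of_set (Ps i j) ! m - 1)" .
qed

lemma coord_b:
  assumes ij: "i \<in> {1..S}" "j \<in> {1..v}" and m: "card (Ps i j) \<le> m" "m < n0"
  shows "(w i j x @ E0 (w i j x)) ! m = 0"
proof -
  have fin: "finite (Ps i j)" using fin_Ps[OF ij] .
  have lr: "length (restrict_vec x (Ps i j)) = card (Ps i j)" using fin by (simp add: length_restrict)
  have "(w i j x @ E0 (w i j x)) ! m = w i j x ! m" using m len_w[OF ij] by (simp add: nth_append)
  also have "\<dots> = 0" unfolding w_def pad_zeros_def using m lr by (simp add: nth_append)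
  finally show ?thesis .
qed

lemma coord_c:
  assumes x: "length x = n" and ij: "i \<in> {1..S}" "j \<in> {1..v}" and m: "n0 \<le> m" "m < n0 + r0"
  shows "(w i j x @ E0 (w i j x)) ! m = (x @ E x) ! (n + ((i-1)*v + (j-1))*r0 + (m - n0))"
proof -
  have "(w i j x @ E0 (w i j x)) ! m = E0 (w i j x) ! (m - n0)" using m len_w[OF ij] by (simp add: nth_append)
  also have "\<dots> = E x ! (((i-1)*v + (j-1))*r0 + (m - n0))" using E_nth[OF ij, of "m - n0" x] m by simp
  also have "\<dots> = (x @ E x) ! (n + ((i-1)*v + (j-1))*r0 + (m - n0))" using x by (simp add: nth_append)
  finally show ?thesis .
qed


lemma main_flat:
  fixes Q :: "'q set" and g :: "'q \<Rightarrow> nat"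
  assumes bc0: "batch_code u t (n0+r0) n0 C0" and uc: "u_complete n u v S Ps"
    and finQ: "finite Q" and cQ: "card Q \<le> t" and gQ: "g ` Q \<subseteq> {1..n}"
    and cgQ: "card (g ` Q) \<le> u*v" and uvn: "u*v \<le> n"
  shows "\<exists>R. (\<forall>q\<in>Q. recovering_set (n+v*S*r0) C (g q) (R q)) \<and>
             (\<forall>q\<in>Q. \<forall>q'\<in>Q. q \<noteq> q' \<longrightarrow> R q \<inter> R q' = {})"
proof -
  define N where "N = n+v*S*r0"
  obtain I where I: "g ` Q \<subseteq> I" "I \<subseteq> {1..n}" "card I = u*v"
    using exists_subset_between[OF cgQ _ gQ] uvn by auto
  obtain i0 where i0: "i0 \<in> {1..S}" "covers u v (Ps i0) I"
    using uc I unfolding u_complete_def by blast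
  have vp: "v_partition n v (Ps i0)" using uc i0 unfolding u_complete_def by blast
  define P where "P j = Ps i0 j" for j
  have Pdisj: "\<And>j j'. j \<in> {1..v} \<Longrightarrow> j' \<in> {1..v} \<Longrightarrow> j \<noteq> j' \<Longrightarrow> P j \<inter> P j' = {}"
    using vp unfolding v_partition_def P_def by blast
  have Psub: "\<And>j. j \<in> {1..v} \<Longrightarrow> P j \<subseteq> {1..n}" unfolding P_def using Ps_sub i0(1) by blast
  have Pfin: "\<And>j. j \<in> {1..v} \<Longrightarrow> finite (P j)" unfolding P_def using fin_Ps i0(1) by blast
  have Pcard: "\<And>j. j \<in> {1..v} \<Longrightarrow> card (P j) \<le> n0" unfolding P_def using Ps_card i0(1) by blast
  have Pcov: "\<And>j. j \<in> {1..v} \<Longrightarrow> card (P j \<inter> I) = u" using i0 unfolding covers_def P_def by blast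
  define part where "part q = (SOME j. j \<in> {1..v} \<and> g q \<in> P j)" for q
  have part: "part q \<in> {1..v} \<and> g q \<in> P (part q)" if q: "q \<in> Q" for q
  proof -
    have "g q \<in> {1..n}" using gQ q by blast
    then have "\<exists>j. j \<in> {1..v} \<and> g q \<in> P j" using vp unfolding v_partition_def P_def by blast
    then show ?thesis unfolding part_def by (rule someI_ex)
  qed
  define L where "L j = sorted_list_of_set (P j)" for j
  define idx where "idx j z = (SOME m. m < card (P j) \<and> L j ! m = z)" for j z
  have idx: "idx j z < card (P j) \<and> L j ! idx j z = z" if j: "j \<in> {1..v}" and z: "z \<in> P j" for j z
  proof -
    have "z \<in> set (L j)" using z Pfin[OF j] L_def by simp
    then obtain m where "m < length (L j)" "L j ! m = z" by (metis in_set_conv_nth)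
    then have "\<exists>m. m < card (P j) \<and> L j ! m = z" using Pfin[OF j] L_def by auto
    then show ?thesis unfolding idx_def by (rule someI_ex)
  qed
  define Qj where "Qj j = {q\<in>Q. part q = j}" for j
  define gj where "gj j q = idx j (g q) + 1" for j q
  have "\<forall>j\<in>{1..v}. \<exists>R0. (\<forall>q\<in>Qj j. recovering_set (n0+r0) C0 (gj j q) (R0 q)) \<and>
             (\<forall>q\<in>Qj j. \<forall>q'\<in>Qj j. q \<noteq> q' \<longrightarrow> R0 q \<inter> R0 q' = {})"
  proof
    fix j assume j: "j \<in> {1..v}"
    have finQj: "finite (Qj j)" using finQ Qj_def by auto
    have cQj: "card (Qj j) \<le> t" using card_mono[OF finQ, of "Qj j"] cQ Qj_def by auto
    have sub: "g ` Qj j \<subseteq> P j \<inter> I" using part I(1) Qj_def by auto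
    have finI: "finite I" using I(2) finite_subset by blast
    have "card (gj j ` Qj j) \<le> card (g ` Qj j)"
    proof -
      have "gj j ` Qj j = (\<lambda>z. idx j z + 1) ` (g ` Qj j)" unfolding gj_def by auto
      then show ?thesis by (simp add: card_image_le finQj)
    qed
    also have "\<dots> \<le> card (P j \<inter> I)" using sub finI by (simp add: card_mono)
    also have "\<dots> = u" using Pcov[OF j] .
    finally have cg: "card (gj j ` Qj j) \<le> u" .
    have gr: "gj j ` Qj j \<subseteq> {1..n0}"
    proof
      fix m assume "m \<in> gj j ` Qj j"
      then obtain q where q: "q \<in> Qj j" "m = gj j q" by blast
      have "g q \<in> P j" using part q Qj_def by auto
      then have "idx j (g q) < card (P j)" using idx j by blast
      then show "m \<in> {1..n0}" using q Pcard[OF j] gj_def by auto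
    qed
    show "\<exists>R0. (\<forall>q\<in>Qj j. recovering_set (n0+r0) C0 (gj j q) (R0 q)) \<and>
             (\<forall>q\<in>Qj j. \<forall>q'\<in>Qj j. q \<noteq> q' \<longrightarrow> R0 q \<inter> R0 q' = {})"
      by (rule batch_flat[OF bc0 finQj cQj cg gr])
  qed
  then obtain R0 where R0rec: "\<And>j q. j \<in> {1..v} \<Longrightarrow> q \<in> Qj j \<Longrightarrow> recovering_set (n0+r0) C0 (gj j q) (R0 j q)"
    and R0dis: "\<And>j q q'. j \<in> {1..v} \<Longrightarrow> q \<in> Qj j \<Longrightarrow> q' \<in> Qj j \<Longrightarrow> q \<noteq> q' \<Longrightarrow> R0 j q \<inter> R0 j q' = {}"
    by (metis (no_types, lifting) bchoice)
  define b where "b j = (i0-1)*v + (j-1)" for j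
  define \<phi> where "\<phi> j m = (if m \<le> n0 then L j ! (m-1) else n + b j * r0 + (m - n0))" for j m
  define U where "U j = {1..card (P j)} \<union> {n0+1..n0+r0}" for j
  define B where "B j = {n + b j * r0 + 1 .. n + b j * r0 + r0}" for j
  have LP: "L j ! (m-1) \<in> P j" if j: "j \<in> {1..v}" and m: "m \<in> {1..card (P j)}" for j m
  proof -
    have "m - 1 < length (L j)" using m Pfin[OF j] L_def by auto
    then show ?thesis using Pfin[OF j] L_def by (metis nth_mem set_sorted_list_of_set)
  qed
  have phiU: "\<phi> j m \<in> P j \<union> B j" if j: "j \<in> {1..v}" and m: "m \<in> U j" for j m
  proof (cases "m \<le> card (P j)")
    case True
    then have "m \<in> {1..card (P j)}" using m U_def by auto
    moreover have "m \<le> n0" using True Pcard[OF j] by simp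
    ultimately show ?thesis using LP[OF j] \<phi>_def by simp
  next
    case False
    then have m2: "n0+1 \<le> m" "m \<le> n0+r0" using m U_def by auto
    then show ?thesis unfolding \<phi>_def B_def by auto
  qed
  have BN: "B j \<subseteq> {n+1..N}" if j: "j \<in> {1..v}" for j
  proof -
    have "b j + 1 \<le> S*v"
    proof -
      have "b j + 1 = (i0-1)*v + j" using j b_def by auto
      also have "\<dots> \<le> (i0-1)*v + v" using j by simp
      also have "\<dots> = i0*v" using i0 by (cases i0) auto
      also have "\<dots> \<le> S*v" using i0 by simp
      finally show ?thesis .
    qed
    then have "(b j + 1)*r0 \<le> (S*v)*r0" by (rule mult_le_mono1)
    then have "b j * r0 + r0 \<le> v*S*r0" by (simp add: algebra_simps)
    then show ?thesis unfolding B_def N_def by auto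
  qed
  have inj: "inj_on (\<phi> j) (U j)" if j: "j \<in> {1..v}" for j
  proof
    fix m m' assume m: "m \<in> U j" and m': "m' \<in> U j" and eq: "\<phi> j m = \<phi> j m'"
    have dL: "distinct (L j)" using L_def by simp
    have lL: "length (L j) = card (P j)" using L_def Pfin[OF j] by simp
    have cn: "card (P j) \<le> n0" using Pcard[OF j] .
    show "m = m'"
    proof (cases "m \<le> n0"; cases "m' \<le> n0")
      assume a: "m \<le> n0" "m' \<le> n0"
      then have mm: "m \<in> {1..card (P j)}" "m' \<in> {1..card (P j)}" using m m' U_def by auto
      then have "L j ! (m-1) = L j ! (m'-1)" using eq a \<phi>_def by simp
      then have "m - 1 = m' - 1" using dL lL mm nth_eq_iff_index_eq[OF dL, of "m-1" "m'-1"] by auto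
      then show ?thesis using mm by auto
    next
      assume a: "m \<le> n0" "\<not> m' \<le> n0"
      then have mm: "m \<in> {1..card (P j)}" using m U_def by auto
      have "L j ! (m-1) \<le> n" using LP[OF j mm] Psub[OF j] by auto
      then show ?thesis using eq a \<phi>_def by simp
    next
      assume a: "\<not> m \<le> n0" "m' \<le> n0"
      then have mm: "m' \<in> {1..card (P j)}" using m' U_def by auto
      have "L j ! (m'-1) \<le> n" using LP[OF j mm] Psub[OF j] by auto
      then show ?thesis using eq a \<phi>_def by simp
    next
      assume a: "\<not> m \<le> n0" "\<not> m' \<le> n0"
      then show ?thesis using eq \<phi>_def by simp
    qed
  qed
  have Bdisj: "B j \<inter> B j' = {}" if j: "j \<in> {1..v}" and j': "j' \<in> {1..v}" and ne: "j \<noteq> j'" for j j'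
  proof (rule ccontr)
    assume "B j \<inter> B j' \<noteq> {}"
    then obtain z where z: "z \<in> B j" "z \<in> B j'" by blast
    have zz: "n + b j * r0 + 1 \<le> z" "z \<le> n + b j * r0 + r0" using z(1) B_def by auto
    obtain k where k: "k < r0" "z = n + (b j * r0 + k) + 1"
      by (rule that[of "z - (n + b j * r0) - 1"]) (use zz in linarith)+
    have zz': "n + b j' * r0 + 1 \<le> z" "z \<le> n + b j' * r0 + r0" using z(2) B_def by auto
    obtain k' where k': "k' < r0" "z = n + (b j' * r0 + k') + 1"
      by (rule that[of "z - (n + b j' * r0) - 1"]) (use zz' in linarith)+
    have "b j = b j'" using div_block[OF k(1) k'(1)] k(2) k'(2) by simp
    then show False using j j' ne b_def by auto
  qed
  have PB: "P j \<inter> B j' = {}" if j: "j \<in> {1..v}" for j j'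
    using Psub[OF j] B_def by auto
  define R where "R q = \<phi> (part q) ` (R0 (part q) q \<inter> U (part q))" for q
  show ?thesis
  proof (intro exI[of _ R] conjI ballI impI)
    fix q assume q: "q \<in> Q"
    define j where "j = part q"
    have j: "j \<in> {1..v}" and gqP: "g q \<in> P j" using part[OF q] j_def by auto
    have qj: "q \<in> Qj j" using q j_def Qj_def by auto
    obtain lam where R0sub: "R0 j q \<subseteq> {1..n0+r0}"
      and lam: "\<forall>c\<in>C0. c ! (gj j q - 1) = (\<Sum>k\<in>R0 j q. lam k * c ! (k - 1))"
      using R0rec[OF j qj] unfolding recovering_set_def by blast
    define A where "A = R0 j q \<inter> U j"
    have AU: "A \<subseteq> U j" using A_def by auto
    have finR0: "finite (R0 j q)" using R0sub finite_subset by blast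
    have finA: "finite A" using A_def finR0 by auto
    have Rq: "R q = \<phi> j ` A" using R_def A_def j_def by simp
    have injA: "inj_on (\<phi> j) A" using inj_on_subset[OF inj[OF j] AU] .
    have Rsub: "R q \<subseteq> {1..N}"
    proof
      fix z assume "z \<in> R q"
      then obtain m where "m \<in> A" "z = \<phi> j m" using Rq by blast
      then have "z \<in> P j \<union> B j" using phiU[OF j] AU by blast
      then show "z \<in> {1..N}" using Psub[OF j] BN[OF j] N_def by auto
    qed
    show "recovering_set (n + v * S * r0) C (g q) (R q)"
      unfolding recovering_set_def
    proof (intro conjI exI[of _ "\<lambda>k. lam (inv_into A (\<phi> j) k)"] ballI)
      show "R q \<subseteq> {1..n + v * S * r0}" using Rsub N_def by simp
    next
      fix c assume "c \<in> C"
      then obtain x where x: "length x = n" "c = x @ E x" unfolding C_def by blast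
      define y where "y = w i0 j x @ E0 (w i0 j x)"
      have yC0: "y \<in> C0" using E0 len_w[OF i0(1) j] y_def by blast
      define m0 where "m0 = idx j (g q)"
      have m0: "m0 < card (P j)" "L j ! m0 = g q" using idx[OF j gqP] m0_def by auto
      have g1: "gj j q - 1 = m0" using gj_def m0_def by simp
      have "c ! (g q - 1) = y ! m0"
        using coord_a(1)[OF x(1) i0(1) j, of m0] m0 x(2) y_def P_def L_def by simp
      also have "\<dots> = (\<Sum>k\<in>R0 j q. lam k * y ! (k - 1))" using lam yC0 g1 by metis
      also have "\<dots> = (\<Sum>k\<in>A. lam k * y ! (k - 1))"
      proof (rule sum.mono_neutral_right[OF finR0])
        show "A \<subseteq> R0 j q" using A_def by auto
        show "\<forall>k\<in>R0 j q - A. lam k * y ! (k - 1) = 0"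
        proof
          fix k assume k: "k \<in> R0 j q - A"
          then have "k \<in> {1..n0+r0}" "k \<notin> U j" using R0sub A_def by auto
          then have "card (P j) \<le> k - 1" "k - 1 < n0" using U_def by auto
          then have "y ! (k-1) = 0" using coord_b[OF i0(1) j] y_def P_def by simp
          then show "lam k * y ! (k - 1) = 0" by simp
        qed
      qed
      also have "\<dots> = (\<Sum>k\<in>A. lam k * c ! (\<phi> j k - 1))"
      proof (rule sum.cong[OF refl])
        fix k assume "k \<in> A"
        then have kU: "k \<in> U j" using AU by blast
        have "y ! (k - 1) = c ! (\<phi> j k - 1)"
        proof (cases "k \<le> card (P j)")
          case True
          then have k1: "1 \<le> k" "k \<le> n0" using kU U_def Pcard[OF j] by auto
          have "y ! (k-1) = (x @ E x) ! (L j ! (k-1) - 1)"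
            using coord_a(1)[OF x(1) i0(1) j, of "k-1"] True k1 y_def P_def L_def by simp
          then show ?thesis using k1 x(2) \<phi>_def by simp
        next
          case False
          then have k1: "n0 + 1 \<le> k" "k \<le> n0 + r0" using kU U_def by auto
          have "y ! (k-1) = (x @ E x) ! (n + ((i0-1)*v + (j-1))*r0 + (k - 1 - n0))"
            using coord_c[OF x(1) i0(1) j, of "k-1"] k1 y_def by simp
          moreover have "\<phi> j k - 1 = n + ((i0-1)*v + (j-1))*r0 + (k - 1 - n0)"
            using k1 \<phi>_def b_def by simp
          ultimately show ?thesis using x(2) by simp
        qed
        then show "lam k * y ! (k - 1) = lam k * c ! (\<phi> j k - 1)" by simp
      qed
      also have "\<dots> = (\<Sum>k'\<in>\<phi> j ` A. lam (inv_into A (\<phi> j) k') * c ! (k' - 1))"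
        by (subst sum.reindex[OF injA]) (simp add: inv_into_f_f[OF injA])
      finally show "c ! (g q - 1) = (\<Sum>k\<in>R q. lam (inv_into A (\<phi> j) k) * c ! (k - 1))"
        using Rq by simp
    qed
  next
    fix q q' assume q: "q \<in> Q" and q': "q' \<in> Q" and ne: "q \<noteq> q'"
    have j: "part q \<in> {1..v}" and j': "part q' \<in> {1..v}" using part q q' by auto
    show "R q \<inter> R q' = {}"
    proof (cases "part q = part q'")
      case True
      define j where "j = part q"
      have qj: "q \<in> Qj j" "q' \<in> Qj j" using q q' True j_def Qj_def by auto
      have "R q \<inter> R q' = \<phi> j ` (R0 j q \<inter> U j) \<inter> \<phi> j ` (R0 j q' \<inter> U j)"
        using R_def True j_def by simp
      also have "\<dots> = \<phi> j ` ((R0 j q \<inter> U j) \<inter> (R0 j q' \<inter> U j))"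
        using inj_on_image_Int[OF inj[of j], of "R0 j q \<inter> U j" "R0 j q' \<inter> U j"] j j_def by auto
      also have "\<dots> = {}" using R0dis[of j q q'] qj ne j j_def by auto
      finally show ?thesis .
    next
      case False
      have s1: "R q \<subseteq> P (part q) \<union> B (part q)" using phiU[OF j] R_def by auto
      have s2: "R q' \<subseteq> P (part q') \<union> B (part q')" using phiU[OF j'] R_def by auto
      have "(P (part q) \<union> B (part q)) \<inter> (P (part q') \<union> B (part q')) = {}"
        using Pdisj[OF j j' False] Bdisj[OF j j' False] PB[OF j, of "part q'"] PB[OF j', of "part q"] by blast
      then show ?thesis using s1 s2 by blast
    qed
  qed
qed

end

theorem theorem4:
  fixes n v s t u n0 S r0 :: nat
    and Ps :: "nat \<Rightarrow> nat \<Rightarrow> nat set"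
    and C0 :: "('a::{field,finite}) list set"
    and E0 :: "'a list \<Rightarrow> 'a list"
  assumes "1 \<le> v" "v \<le> s" "s \<le> t" "t \<le> n"
    and "u = nat \<lceil>real s / real v\<rceil>"
    and "u * v \<le> n"
    and "n0 = n - u * (v - 1)"
    and "u_complete n u v S Ps"
    and "\<forall>i\<in>{1..S}. \<forall>j\<in>{1..v}. card (Ps i j) \<le> n0"
    and "batch_code u t (n0 + r0) n0 C0"
    and "\<forall>x. length x = n0 \<longrightarrow> length (E0 x) = r0 \<and> x @ E0 x \<in> C0"
  shows "batch_code s t (n + v * S * r0) n
           {x @ construct_encoder n0 v S Ps E0 x | x. length x = n}"
proof -
  have sysC0: "systematic (n0+r0) n0 C0" using assms(10) unfolding batch_code_def by blast
  have Ps_sub: "\<And>i j. i \<in> {1..S} \<Longrightarrow> j \<in> {1..v} \<Longrightarrow> Ps i j \<subseteq> {1..n}"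
    using assms(8) unfolding u_complete_def v_partition_def by blast
  have Ps_card: "\<And>i j. i \<in> {1..S} \<Longrightarrow> j \<in> {1..v} \<Longrightarrow> card (Ps i j) \<le> n0"
    using assms(9) by blast
  interpret cs: constr n n0 r0 v S Ps C0 E0
    by (unfold_locales) (use sysC0 assms(11) Ps_sub Ps_card in blast)+
  have Ceq: "{x @ construct_encoder n0 v S Ps E0 x | x. length x = n} = cs.C"
    unfolding cs.C_def cs.E_def ..
  have suv: "s \<le> u * v"
  proof -
    have vpos: "real v > 0" using assms(1) by simp
    have "real s / real v \<le> of_int \<lceil>real s / real v\<rceil>" by (rule le_of_int_ceiling)
    also have "\<dots> = real u" using assms(5) by simp
    finally have "real s \<le> real u * real v" using vpos by (simp add: divide_le_eq)
    then show ?thesis by (simp add: of_nat_mult[symmetric] del: of_nat_mult)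
  qed
  show ?thesis unfolding Ceq batch_code_def
  proof (intro conjI allI impI)
    show "1 \<le> s" using assms(1,2) by simp
    show "s \<le> t" using assms(3) .
    show "systematic (n + v * S * r0) n cs.C" by (rule cs.C_sys)
  next
    fix ii a :: "nat \<Rightarrow> nat"
    assume ii: "\<forall>j\<in>{1..s}. ii j \<in> {1..n}" and sa: "(\<Sum>j = 1..s. a j) = t"
    define Q where "Q = Sigma {1..s} (\<lambda>j. {1..a j})"
    define g where "g q = ii (fst q)" for q :: "nat \<times> nat"
    have finQ: "finite Q" unfolding Q_def by auto
    have cQ: "card Q \<le> t" unfolding Q_def using sa by simp
    have gsub: "g ` Q \<subseteq> ii ` {1..s}" unfolding Q_def g_def by auto
    have gQ: "g ` Q \<subseteq> {1..n}" using gsub ii by auto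
    have "card (g ` Q) \<le> card (ii ` {1..s})" using gsub by (simp add: card_mono)
    also have "\<dots> \<le> card {1..s}" by (rule card_image_le) simp
    also have "\<dots> \<le> u * v" using suv by simp
    finally have cgQ: "card (g ` Q) \<le> u * v" .
    obtain Rf where Rf1: "\<forall>q\<in>Q. recovering_set (n + v * S * r0) cs.C (g q) (Rf q)"
      and Rf2: "\<forall>q\<in>Q. \<forall>q'\<in>Q. q \<noteq> q' \<longrightarrow> Rf q \<inter> Rf q' = {}"
      using cs.main_flat[OF assms(10) assms(8) finQ cQ gQ cgQ assms(6)] by blast
    show "\<exists>R. (\<forall>j\<in>{1..s}. \<forall>l\<in>{1..a j}. recovering_set (n + v * S * r0) cs.C (ii j) (R j l)) \<and>
           (\<forall>j\<in>{1..s}. \<forall>l\<in>{1..a j}. \<forall>j'\<in>{1..s}. \<forall>l'\<in>{1..a j'}.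
               (j, l) \<noteq> (j', l') \<longrightarrow> R j l \<inter> R j' l' = {})"
    proof (intro exI[of _ "\<lambda>j l. Rf (j, l)"] conjI ballI impI)
      fix j l assume "j \<in> {1..s}" "l \<in> {1..a j}"
      then have "(j, l) \<in> Q" unfolding Q_def by auto
      then show "recovering_set (n + v * S * r0) cs.C (ii j) (Rf (j, l))" using Rf1 g_def by fastforce
    next
      fix j l j' l' assume "j \<in> {1..s}" "l \<in> {1..a j}" "j' \<in> {1..s}" "l' \<in> {1..a j'}"
        and ne: "(j, l) \<noteq> (j', l')"
      then have "(j, l) \<in> Q" "(j', l') \<in> Q" unfolding Q_def by auto
      then show "Rf (j, l) \<inter> Rf (j', l') = {}" using Rf2 ne by blast
    qed
  qed
qed

end
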